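(* Let $\dot E=(E,(C,S),(D,T))$ be a bi-separated graph with distinguished subsets. If $\dot E$ is tame, then $\dot E$ is the direct limit (union) of a directed family of finite complete sub-objects of $\dot E$. Conversely, if $\dot E$ is the direct limit (union) of a directed family of finite complete sub-objects, then $\dot E$ is tame.
   Context: A graph $E=(E^0,E^1,r,s)$ has vertex set $E^0$, edge set $E^1$, range and source maps $r,s:E^1\to E^0$. A bi-separated graph with distinguished subsets is $\dot E=(E,(C,S),(D,T))$ where: $C=\bigsqcup_{v}C_v$ with $C_v$ a partition of $s^{-1}(v)$ into nonempty subsets for each non-sink $v$; $D=\bigsqcup_v D_v$ with $D_v$ a partition of $r^{-1}(v)$ into nonempty subsets for each non-source $v$; $|X\cap Y|\le 1$ for all $X\in C$, $Y\in D$; $C_{\rm fin}=\{X\in C:|X|<\infty\}$, $D_{\rm fin}=\{Y\in D:|Y|<\infty\}$, and $S\subseteq C_{\rm fin}$, $T\subseteq D_{\rm fin}$. A complete sub-object of $\dot E$ is given by a subgraph $E'$ of $E$ (i.e. $(E')^0\subseteq E^0$, $(E')^1\subseteq E^1$ with $s(e),r(e)\in (E')^0$ for $e\in(E')^1$) such that every $X\in S$ with $X\cap (E')^1\neq\emptyset$ satisfies $X\subseteq (E')^1$ and every $Y\in T$ with $Y\cap(E')^1\ne\emptyset$ satisfies $Y\subseteq (E')^1$, equipped with $C'=\{X\cap(E')^1: X\in C\setminus S,\ X\cap (E')^1\neq\emptyset\}\sqcup S'$, $S'=\{X\in S: X\cap(E')^1\neq\emptyset\}$, $D'=\{Y\cap(E')^1:Y\in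 D\setminus T,\ Y\cap(E')^1\ne\emptyset\}\sqcup T'$, $T'=\{Y\in T:Y\cap (E')^1\neq\emptyset\}$. It is finite if $(E')^0$ and $(E')^1$ are finite. A family of complete sub-objects is directed if any two are contained in a third (as subgraphs); $\dot E$ is its direct limit (union) if every vertex and every edge of $E$ lies in some member of the family. Tameness: let $S_1=\{X\in S: X\cap Y\neq\emptyset \text{ for some } Y\in T\}$ and $T_1=\{Y\in T: X\cap Y\ne\emptyset\text{ for some }X\in S\}$. On $S_1$ define $X\sim_T X'$ if $X=X'$ or there is a sequence $X_0,Y_1,X_1,\dots,Y_n,X_n$ with $X_i\in S$, $Y_i\in T$, $X_0=X$, $X_n=X'$, $X_{i-1}\cap Y_i\ne\emptyset$ and $Y_i\cap X_i\neq\emptyset$ for all $i$; define $\sim_S$ on $T_1$ symmetrically (sequences $Y_0,X_1,Y_1,\dots$ with consecutive members intersecting). These are equivalence relations. $\dot E$ is tame if every $\sim_T$-class in $S_1$ and every $\sim_S$-class in $T_1$ is finite. *)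

theory Defs
  imports Main
begin

text \<open>A graph is given by a vertex set V, an edge set Ed and range/source maps r, s.
  Separations C, D and distinguished subsets S, T are sets of edge sets.\<close>

definition is_partition_of :: "'a set set \<Rightarrow> 'a set \<Rightarrow> bool" where
  "is_partition_of P A \<longleftrightarrow>
     (\<forall>X\<in>P. X \<noteq> {} \<and> X \<subseteq> A) \<and>
     (\<forall>X\<in>P. \<forall>X'\<in>P. X \<noteq> X' \<longrightarrow> X \<inter> X' = {}) \<and>
     \<Union>P = A"

definition is_graph :: "'v set \<Rightarrow> 'e set \<Rightarrow> ('e \<Rightarrow> 'v) \<Rightarrow> ('e \<Rightarrow> 'v) \<Rightarrow> bool" where
  "is_graph V Ed r s \<longleftrightarrow> (\<forall>e\<in>Ed. s e \<in> V \<and> r e \<in> V)"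

definition bisep_graph ::
  "'v set \<Rightarrow> 'e set \<Rightarrow> ('e \<Rightarrow> 'v) \<Rightarrow> ('e \<Rightarrow> 'v) \<Rightarrow>
   'e set set \<Rightarrow> 'e set set \<Rightarrow> 'e set set \<Rightarrow> 'e set set \<Rightarrow> bool" where
  "bisep_graph V Ed r s C S D T \<longleftrightarrow>
     is_graph V Ed r s \<and>
     (\<forall>X\<in>C. \<exists>v\<in>V. X \<subseteq> {e\<in>Ed. s e = v}) \<and>
     (\<forall>v\<in>V. {e\<in>Ed. s e = v} \<noteq> {} \<longrightarrow>
        is_partition_of {X\<in>C. X \<subseteq> {e\<in>Ed. s e = v}} {e\<in>Ed. s e = v}) \<and>
     (\<forall>Y\<in>D. \<exists>v\<in>V. Y \<subseteq> {e\<in>Ed. r e = v}) \<and>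
     (\<forall>v\<in>V. {e\<in>Ed. r e = v} \<noteq> {} \<longrightarrow>
        is_partition_of {Y\<in>D. Y \<subseteq> {e\<in>Ed. r e = v}} {e\<in>Ed. r e = v}) \<and>
     (\<forall>X\<in>C. \<forall>Y\<in>D. finite (X \<inter> Y) \<and> card (X \<inter> Y) \<le> 1) \<and>
     S \<subseteq> {X\<in>C. finite X} \<and>
     T \<subseteq> {Y\<in>D. finite Y}"

definition S1 :: "'e set set \<Rightarrow> 'e set set \<Rightarrow> 'e set set" where
  "S1 S T = {X\<in>S. \<exists>Y\<in>T. X \<inter> Y \<noteq> {}}"

definition stepT :: "'e set set \<Rightarrow> 'e set set \<Rightarrow> ('e set \<times> 'e set) set" where
  "stepT S T = {(X, X'). X \<in> S \<and> X' \<in> S \<and> (\<exists>Y\<in>T. X \<inter> Y \<noteq> {} \<and> Y \<inter> X' \<noteq> {})}"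

definition simT :: "'e set set \<Rightarrow> 'e set set \<Rightarrow> 'e set \<Rightarrow> 'e set \<Rightarrow> bool" where
  "simT S T X X' \<longleftrightarrow> X \<in> S1 S T \<and> X' \<in> S1 S T \<and> (X, X') \<in> (stepT S T)\<^sup>*"

definition tame :: "'e set set \<Rightarrow> 'e set set \<Rightarrow> bool" where
  "tame S T \<longleftrightarrow>
     (\<forall>X\<in>S1 S T. finite {X'. simT S T X X'}) \<and>
     (\<forall>Y\<in>S1 T S. finite {Y'. simT T S Y Y'})"

text \<open>Complete sub-object, given by its subgraph (V', E'); the induced separations
  C', S', D', T' are determined by the subgraph.\<close>
definition complete_subobj ::
  "'v set \<Rightarrow> 'e set \<Rightarrow> ('e \<Rightarrow> 'v) \<Rightarrow> ('e \<Rightarrow> 'v) \<Rightarrow> 'e set set \<Rightarrow> 'e set set \<Rightarrow>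
   'v set \<Rightarrow> 'e set \<Rightarrow> bool" where
  "complete_subobj V Ed r s S T V' E' \<longleftrightarrow>
     V' \<subseteq> V \<and> E' \<subseteq> Ed \<and> (\<forall>e\<in>E'. s e \<in> V' \<and> r e \<in> V') \<and>
     (\<forall>X\<in>S. X \<inter> E' \<noteq> {} \<longrightarrow> X \<subseteq> E') \<and>
     (\<forall>Y\<in>T. Y \<inter> E' \<noteq> {} \<longrightarrow> Y \<subseteq> E')"

definition directed_family :: "('v set \<times> 'e set) set \<Rightarrow> bool" where
  "directed_family F \<longleftrightarrow> F \<noteq> {} \<and>
     (\<forall>A\<in>F. \<forall>B\<in>F. \<exists>G\<in>F. fst A \<subseteq> fst G \<and> snd A \<subseteq> snd G \<and>
                            fst B \<subseteq> fst G \<and> snd B \<subseteq> snd G)"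

definition is_union_of :: "'v set \<Rightarrow> 'e set \<Rightarrow> ('v set \<times> 'e set) set \<Rightarrow> bool" where
  "is_union_of V Ed F \<longleftrightarrow> (\<forall>v\<in>V. \<exists>A\<in>F. v \<in> fst A) \<and> (\<forall>e\<in>Ed. \<exists>A\<in>F. e \<in> snd A)"

end

theory Submission
  imports Defs
begin

lemma rt_cases_S1:
  assumes "(X0, X') \<in> (stepT S T)\<^sup>*"
  shows "X' = X0 \<or> X' \<in> S1 S T"
  using assms
proof (cases rule: rtranclE)
  case (step Z)
  then show ?thesis unfolding stepT_def S1_def by (auto simp: Int_commute)
qed auto

lemma rt_in_S:
  assumes "(X0, X') \<in> (stepT S T)\<^sup>*" "X0 \<in> S"
  shows "X' \<in> S"
  using assms(1)
proof (cases rule: rtranclE)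
  case (step Z)
  then show ?thesis unfolding stepT_def by auto
qed (use assms in auto)

lemma rt_notS1:
  assumes "(X0, X') \<in> (stepT S T)\<^sup>*" "X0 \<notin> S1 S T"
  shows "X' = X0"
  using assms(1)
proof (cases rule: converse_rtranclE)
  case (step Z)
  then show ?thesis using assms(2) unfolding stepT_def S1_def by auto
qed auto

lemma closure_lemma:
  assumes uS: "\<forall>X\<in>S. \<forall>X'\<in>S. X \<inter> X' \<noteq> {} \<longrightarrow> X = X'"
    and uT: "\<forall>X\<in>T. \<forall>X'\<in>T. X \<inter> X' \<noteq> {} \<longrightarrow> X = X'"
    and fS: "\<forall>X\<in>S. finite X" and fT: "\<forall>X\<in>T. finite X"
    and tm: "\<forall>X\<in>S1 S T. finite {X'. simT S T X X'}"
    and X0: "X0 \<in> S"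
  shows "\<exists>E'. finite E' \<and> X0 \<subseteq> E' \<and> E' \<subseteq> \<Union>S \<union> \<Union>T \<and>
     (\<forall>X\<in>S. X \<inter> E' \<noteq> {} \<longrightarrow> X \<subseteq> E') \<and> (\<forall>Y\<in>T. Y \<inter> E' \<noteq> {} \<longrightarrow> Y \<subseteq> E')"
proof -
  define K where "K = {X'. (X0, X') \<in> (stepT S T)\<^sup>*}"
  define YS where "YS = {Y\<in>T. \<exists>X'\<in>K. X' \<inter> Y \<noteq> {}}"
  have KS: "K \<subseteq> S" using rt_in_S X0 unfolding K_def by blast
  have finK: "finite K"
  proof (cases "X0 \<in> S1 S T")
    case True
    have "K \<subseteq> insert X0 {X'. simT S T X0 X'}"
      unfolding K_def simT_def using rt_cases_S1 True by blast
    then show ?thesis using tm True finite_subset by blast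
  next
    case False
    have "K \<subseteq> {X0}" unfolding K_def using rt_notS1 False by blast
    then show ?thesis using finite_subset by blast
  qed
  have finUK: "finite (\<Union>K)" using finK KS fS by auto
  have "YS \<subseteq> (\<lambda>f. THE Y. Y \<in> T \<and> f \<in> Y) ` \<Union>K"
  proof
    fix Y assume "Y \<in> YS"
    then obtain X' f where Y: "Y \<in> T" "X' \<in> K" "f \<in> X'" "f \<in> Y" unfolding YS_def by blast
    have "(THE Y. Y \<in> T \<and> f \<in> Y) = Y"
      apply (rule the_equality) using Y uT by blast+
    then show "Y \<in> (\<lambda>f. THE Y. Y \<in> T \<and> f \<in> Y) ` \<Union>K" using Y by force
  qed
  hence finYS: "finite YS" using finUK finite_surj by blast
  have YST: "YS \<subseteq> T" unfolding YS_def by blast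
  define E' where "E' = \<Union>K \<union> \<Union>YS"
  have "finite E'" unfolding E'_def using finUK finYS YST fT by auto
  moreover have "X0 \<subseteq> E'" unfolding E'_def K_def by auto
  moreover have "E' \<subseteq> \<Union>S \<union> \<Union>T" unfolding E'_def using KS YST by auto
  moreover have "\<forall>X\<in>S. X \<inter> E' \<noteq> {} \<longrightarrow> X \<subseteq> E'"
  proof (intro ballI impI)
    fix X assume X: "X \<in> S" "X \<inter> E' \<noteq> {}"
    show "X \<subseteq> E'"
    proof (cases "\<exists>X'\<in>K. X \<inter> X' \<noteq> {}")
      case True
      then obtain X' where "X' \<in> K" "X \<inter> X' \<noteq> {}" by blast
      then have "X = X'" using uS KS X by blast
      then show ?thesis using \<open>X' \<in> K\<close> unfolding E'_def by auto
    next
      case False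
      then obtain Y X' where Y: "Y \<in> YS" "X \<inter> Y \<noteq> {}" "X' \<in> K" "X' \<inter> Y \<noteq> {}"
        using X unfolding E'_def YS_def by blast
      have "(X', X) \<in> stepT S T" unfolding stepT_def
        using Y YST KS X by (auto simp: Int_commute)
      hence "X \<in> K" using Y(3) unfolding K_def by auto
      then show ?thesis unfolding E'_def by auto
    qed
  qed
  moreover have "\<forall>Y\<in>T. Y \<inter> E' \<noteq> {} \<longrightarrow> Y \<subseteq> E'"
  proof (intro ballI impI)
    fix Y assume Y: "Y \<in> T" "Y \<inter> E' \<noteq> {}"
    show "Y \<subseteq> E'"
    proof (cases "\<exists>X'\<in>K. X' \<inter> Y \<noteq> {}")
      case True
      then have "Y \<in> YS" using Y unfolding YS_def by blast
      then show ?thesis unfolding E'_def by auto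
    next
      case False
      then obtain Y' where "Y' \<in> YS" "Y \<inter> Y' \<noteq> {}" using Y unfolding E'_def by blast
      then have "Y = Y'" using uT YST Y by blast
      then show ?thesis using \<open>Y' \<in> YS\<close> unfolding E'_def by auto
    qed
  qed
  ultimately show ?thesis by blast
qed

lemma uniq_C:
  assumes "bisep_graph V Ed r s C S D T"
  shows "\<forall>X\<in>C. \<forall>X'\<in>C. X \<inter> X' \<noteq> {} \<longrightarrow> X = X'"
proof (intro ballI impI)
  fix X X' assume X: "X \<in> C" "X' \<in> C" "X \<inter> X' \<noteq> {}"
  then obtain f where f: "f \<in> X" "f \<in> X'" by blast
  have P1: "\<forall>X\<in>C. \<exists>v\<in>V. X \<subseteq> {e\<in>Ed. s e = v}" and
    P2: "\<forall>v\<in>V. {e\<in>Ed. s e = v} \<noteq> {} \<longrightarrow>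
        is_partition_of {X\<in>C. X \<subseteq> {e\<in>Ed. s e = v}} {e\<in>Ed. s e = v}"
    using assms unfolding bisep_graph_def by simp_all
  obtain v where v: "v \<in> V" "X \<subseteq> {e\<in>Ed. s e = v}" using P1 X by blast
  obtain v' where v': "v' \<in> V" "X' \<subseteq> {e\<in>Ed. s e = v'}" using P1 X by blast
  have "v = v'" using v v' f by auto
  have "{e\<in>Ed. s e = v} \<noteq> {}" using f v by auto
  hence "is_partition_of {Z\<in>C. Z \<subseteq> {e\<in>Ed. s e = v}} {e\<in>Ed. s e = v}"
    using P2 v by blast
  hence "\<forall>A\<in>{Z\<in>C. Z \<subseteq> {e\<in>Ed. s e = v}}. \<forall>B\<in>{Z\<in>C. Z \<subseteq> {e\<in>Ed. s e = v}}. A \<noteq> B \<longrightarrow> A \<inter> B = {}"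
    unfolding is_partition_of_def by blast
  moreover have "X \<in> {Z\<in>C. Z \<subseteq> {e\<in>Ed. s e = v}}" "X' \<in> {Z\<in>C. Z \<subseteq> {e\<in>Ed. s e = v}}"
    using X v v' \<open>v = v'\<close> by auto
  ultimately show "X = X'" using f by blast
qed

lemma uniq_D:
  assumes "bisep_graph V Ed r s C S D T"
  shows "\<forall>X\<in>D. \<forall>X'\<in>D. X \<inter> X' \<noteq> {} \<longrightarrow> X = X'"
proof (intro ballI impI)
  fix X X' assume X: "X \<in> D" "X' \<in> D" "X \<inter> X' \<noteq> {}"
  then obtain f where f: "f \<in> X" "f \<in> X'" by blast
  have P1: "\<forall>X\<in>D. \<exists>v\<in>V. X \<subseteq> {e\<in>Ed. r e = v}" and
    P2: "\<forall>v\<in>V. {e\<in>Ed. r e = v} \<noteq> {} \<longrightarrow>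
        is_partition_of {X\<in>D. X \<subseteq> {e\<in>Ed. r e = v}} {e\<in>Ed. r e = v}"
    using assms unfolding bisep_graph_def by simp_all
  obtain v where v: "v \<in> V" "X \<subseteq> {e\<in>Ed. r e = v}" using P1 X by blast
  obtain v' where v': "v' \<in> V" "X' \<subseteq> {e\<in>Ed. r e = v'}" using P1 X by blast
  have "v = v'" using v v' f by auto
  have "{e\<in>Ed. r e = v} \<noteq> {}" using f v by auto
  hence "is_partition_of {Z\<in>D. Z \<subseteq> {e\<in>Ed. r e = v}} {e\<in>Ed. r e = v}"
    using P2 v by blast
  hence "\<forall>A\<in>{Z\<in>D. Z \<subseteq> {e\<in>Ed. r e = v}}. \<forall>B\<in>{Z\<in>D. Z \<subseteq> {e\<in>Ed. r e = v}}. A \<noteq> B \<longrightarrow> A \<inter> B = {}"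
    unfolding is_partition_of_def by blast
  moreover have "X \<in> {Z\<in>D. Z \<subseteq> {e\<in>Ed. r e = v}}" "X' \<in> {Z\<in>D. Z \<subseteq> {e\<in>Ed. r e = v}}"
    using X v v' \<open>v = v'\<close> by auto
  ultimately show "X = X'" using f by blast
qed

lemma bg_parts:
  assumes "bisep_graph V Ed r s C S D T"
  shows "\<forall>e\<in>Ed. s e \<in> V \<and> r e \<in> V" "S \<subseteq> C" "T \<subseteq> D"
    "\<forall>X\<in>S. finite X" "\<forall>X\<in>T. finite X" "\<Union>C \<subseteq> Ed" "\<Union>D \<subseteq> Ed"
proof -
  have a: "is_graph V Ed r s" "\<forall>X\<in>C. \<exists>v\<in>V. X \<subseteq> {e\<in>Ed. s e = v}"
    "\<forall>Y\<in>D. \<exists>v\<in>V. Y \<subseteq> {e\<in>Ed. r e = v}" "S \<subseteq> {X\<in>C. finite X}" "T \<subseteq> {Y\<in>D. finite Y}"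
    using assms unfolding bisep_graph_def by (blast, blast, blast, blast, blast)
  show "\<forall>e\<in>Ed. s e \<in> V \<and> r e \<in> V" using a(1) unfolding is_graph_def .
  show "S \<subseteq> C" "T \<subseteq> D" "\<forall>X\<in>S. finite X" "\<forall>X\<in>T. finite X" using a(4,5) by auto
  show "\<Union>C \<subseteq> Ed" using a(2) by blast
  show "\<Union>D \<subseteq> Ed" using a(3) by blast
qed

lemma edge_closure:
  assumes bg: "bisep_graph V Ed r s C S D T" and tm: "tame S T" and e: "e \<in> Ed"
  shows "\<exists>E'. finite E' \<and> e \<in> E' \<and> E' \<subseteq> Ed \<and>
     (\<forall>X\<in>S. X \<inter> E' \<noteq> {} \<longrightarrow> X \<subseteq> E') \<and> (\<forall>Y\<in>T. Y \<inter> E' \<noteq> {} \<longrightarrow> Y \<subseteq> E')"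
proof -
  note P = bg_parts[OF bg]
  have uS: "\<forall>X\<in>S. \<forall>X'\<in>S. X \<inter> X' \<noteq> {} \<longrightarrow> X = X'"
    proof (intro ballI impI)
    fix X X' assume "X \<in> S" "X' \<in> S" "X \<inter> X' \<noteq> {}"
    moreover have "X \<in> C" "X' \<in> C" using P(2) \<open>X \<in> S\<close> \<open>X' \<in> S\<close> by auto
    ultimately show "X = X'" using uniq_C[OF bg] by blast
  qed
  have uT: "\<forall>X\<in>T. \<forall>X'\<in>T. X \<inter> X' \<noteq> {} \<longrightarrow> X = X'"
    proof (intro ballI impI)
    fix X X' assume "X \<in> T" "X' \<in> T" "X \<inter> X' \<noteq> {}"
    moreover have "X \<in> D" "X' \<in> D" using P(3) \<open>X \<in> T\<close> \<open>X' \<in> T\<close> by auto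
    ultimately show "X = X'" using uniq_D[OF bg] by blast
  qed
  have sub: "\<Union>S \<union> \<Union>T \<subseteq> Ed" using P(2,3,6,7) by blast
  have tm1: "\<forall>X\<in>S1 S T. finite {X'. simT S T X X'}" and tm2: "\<forall>X\<in>S1 T S. finite {X'. simT T S X X'}"
    using tm unfolding tame_def by (blast, blast)
  show ?thesis
  proof (cases "\<exists>X0\<in>S. e \<in> X0")
    case True
    then obtain X0 where X0: "X0 \<in> S" "e \<in> X0" by blast
    obtain E' where E': "finite E'" "X0 \<subseteq> E'" "E' \<subseteq> \<Union>S \<union> \<Union>T"
      "\<forall>X\<in>S. X \<inter> E' \<noteq> {} \<longrightarrow> X \<subseteq> E'" "\<forall>Y\<in>T. Y \<inter> E' \<noteq> {} \<longrightarrow> Y \<subseteq> E'"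
      using closure_lemma[OF uS uT P(4) P(5) tm1 X0(1)] by metis
    have "e \<in> E'" using E'(2) X0(2) by blast
    moreover have "E' \<subseteq> Ed" using E'(3) sub by (rule subset_trans)
    ultimately show ?thesis using E'(1,4,5) by blast
  next
    case False
    show ?thesis
    proof (cases "\<exists>X0\<in>T. e \<in> X0")
      case True
      then obtain X0 where X0: "X0 \<in> T" "e \<in> X0" by blast
      obtain E' where E': "finite E'" "X0 \<subseteq> E'" "E' \<subseteq> \<Union>T \<union> \<Union>S"
        "\<forall>X\<in>T. X \<inter> E' \<noteq> {} \<longrightarrow> X \<subseteq> E'" "\<forall>Y\<in>S. Y \<inter> E' \<noteq> {} \<longrightarrow> Y \<subseteq> E'"
        using closure_lemma[OF uT uS P(5) P(4) tm2 X0(1)] by metis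
      have "e \<in> E'" using E'(2) X0(2) by blast
      moreover have "E' \<subseteq> Ed" using E'(3) sub by blast
      ultimately show ?thesis using E'(1,4,5) by blast
    next
      case F2: False
      have "finite {e}" "e \<in> {e}" "{e} \<subseteq> Ed" using e by auto
      moreover have "\<forall>X\<in>S. X \<inter> {e} \<noteq> {} \<longrightarrow> X \<subseteq> {e}" using False by blast
      moreover have "\<forall>Y\<in>T. Y \<inter> {e} \<noteq> {} \<longrightarrow> Y \<subseteq> {e}" using F2 by blast
      ultimately show ?thesis by blast
    qed
  qed
qed

lemma reach_sub:
  assumes "(X, X') \<in> (stepT S T)\<^sup>*" "X \<subseteq> E'"
    and "\<forall>X\<in>S. X \<inter> E' \<noteq> {} \<longrightarrow> X \<subseteq> E'" "\<forall>Y\<in>T. Y \<inter> E' \<noteq> {} \<longrightarrow> Y \<subseteq> E'"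
  shows "X' \<subseteq> E'"
  using assms(1,2)
proof (induction rule: rtrancl_induct)
  case (step Z X')
  then obtain Y where Y: "Y \<in> T" "Z \<inter> Y \<noteq> {}" "Y \<inter> X' \<noteq> {}" "X' \<in> S" unfolding stepT_def by blast
  have "Y \<subseteq> E'" using Y step assms(4) by blast
  then show ?case using Y assms(3) by blast
qed auto

lemma class_finite:
  assumes X: "X \<in> S1 S T" and A: "finite E'" "\<forall>X\<in>S. X \<inter> E' \<noteq> {} \<longrightarrow> X \<subseteq> E'"
    "\<forall>Y\<in>T. Y \<inter> E' \<noteq> {} \<longrightarrow> Y \<subseteq> E'" and XE: "X \<inter> E' \<noteq> {}"
  shows "finite {X'. simT S T X X'}"
proof -
  have "X \<in> S" using X unfolding S1_def by auto
  hence "X \<subseteq> E'" using A XE by blast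
  hence "{X'. simT S T X X'} \<subseteq> Pow E'" unfolding simT_def using reach_sub A by blast
  thus ?thesis using A(1) finite_subset by blast
qed

lemma complete_union:
  assumes "complete_subobj V Ed r s S T V1 E1" "complete_subobj V Ed r s S T V2 E2"
  shows "complete_subobj V Ed r s S T (V1 \<union> V2) (E1 \<union> E2)"
  unfolding complete_subobj_def
proof (intro conjI ballI impI)
  show "V1 \<union> V2 \<subseteq> V" "E1 \<union> E2 \<subseteq> Ed" using assms unfolding complete_subobj_def by auto
next
  fix e assume "e \<in> E1 \<union> E2"
  then show "s e \<in> V1 \<union> V2" "r e \<in> V1 \<union> V2" using assms unfolding complete_subobj_def by auto
next
  fix X assume X: "X \<in> S" "X \<inter> (E1 \<union> E2) \<noteq> {}"
  have h1: "\<forall>X\<in>S. X \<inter> E1 \<noteq> {} \<longrightarrow> X \<subseteq> E1" "\<forall>X\<in>S. X \<inter> E2 \<noteq> {} \<longrightarrow> X \<subseteq> E2"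
    using assms unfolding complete_subobj_def by simp_all
  show "X \<subseteq> E1 \<union> E2"
  proof (cases "X \<inter> E1 = {}")
    case True then have "X \<inter> E2 \<noteq> {}" using X by auto
    then show ?thesis using h1 X by blast
  next
    case False then show ?thesis using h1 X by blast
  qed
next
  fix X assume X: "X \<in> T" "X \<inter> (E1 \<union> E2) \<noteq> {}"
  have h1: "\<forall>X\<in>T. X \<inter> E1 \<noteq> {} \<longrightarrow> X \<subseteq> E1" "\<forall>X\<in>T. X \<inter> E2 \<noteq> {} \<longrightarrow> X \<subseteq> E2"
    using assms unfolding complete_subobj_def by simp_all
  show "X \<subseteq> E1 \<union> E2"
  proof (cases "X \<inter> E1 = {}")
    case True then have "X \<inter> E2 \<noteq> {}" using X by auto
    then show ?thesis using h1 X by blast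
  next
    case False then show ?thesis using h1 X by blast
  qed
qed

theorem mainTheorem1:
  fixes V :: "'v set" and Ed :: "'e set" and r s :: "'e \<Rightarrow> 'v"
    and C S D T :: "'e set set"
  assumes "bisep_graph V Ed r s C S D T"
  shows "tame S T \<longleftrightarrow>
    (\<exists>F. directed_family F \<and>
         (\<forall>A\<in>F. complete_subobj V Ed r s S T (fst A) (snd A) \<and>
                 finite (fst A) \<and> finite (snd A)) \<and>
         is_union_of V Ed F)"
proof
  assume tm: "tame S T"
  define F where "F = {A. complete_subobj V Ed r s S T (fst A) (snd A) \<and>
                 finite (fst A) \<and> finite (snd A)}"
  have gr: "\<forall>e\<in>Ed. s e \<in> V \<and> r e \<in> V" using bg_parts[OF assms] by blast
  have "directed_family F"
    unfolding directed_family_def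
  proof (intro conjI ballI)
    have "({}, {}) \<in> F" unfolding F_def complete_subobj_def by auto
    then show "F \<noteq> {}" by blast
  next
    fix A B assume "A \<in> F" "B \<in> F"
    then have cA: "complete_subobj V Ed r s S T (fst A) (snd A)" "finite (fst A)" "finite (snd A)"
      and cB: "complete_subobj V Ed r s S T (fst B) (snd B)" "finite (fst B)" "finite (snd B)"
      unfolding F_def by auto
    have "complete_subobj V Ed r s S T (fst A \<union> fst B) (snd A \<union> snd B)"
      using complete_union[OF cA(1) cB(1)] .
    then have "(fst A \<union> fst B, snd A \<union> snd B) \<in> F" unfolding F_def using cA cB by simp
    then show "\<exists>G\<in>F. fst A \<subseteq> fst G \<and> snd A \<subseteq> snd G \<and> fst B \<subseteq> fst G \<and> snd B \<subseteq> snd G"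
      by (intro bexI[of _ "(fst A \<union> fst B, snd A \<union> snd B)"]) auto
  qed
  moreover have "is_union_of V Ed F"
    unfolding is_union_of_def
  proof (intro conjI ballI)
    fix v assume "v \<in> V"
    then show "\<exists>A\<in>F. v \<in> fst A"
      apply (intro bexI[of _ "({v}, {})"]) unfolding F_def complete_subobj_def by auto
  next
    fix e assume e: "e \<in> Ed"
    obtain E' where E': "finite E'" "e \<in> E'" "E' \<subseteq> Ed"
      "\<forall>X\<in>S. X \<inter> E' \<noteq> {} \<longrightarrow> X \<subseteq> E'" "\<forall>Y\<in>T. Y \<inter> E' \<noteq> {} \<longrightarrow> Y \<subseteq> E'"
      using edge_closure[OF assms tm e] by metis
    show "\<exists>A\<in>F. e \<in> snd A"
      apply (intro bexI[of _ "(s ` E' \<union> r ` E', E')"]) unfolding F_def complete_subobj_def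
      using E' gr by auto
  qed
  ultimately show "\<exists>F. directed_family F \<and>
         (\<forall>A\<in>F. complete_subobj V Ed r s S T (fst A) (snd A) \<and>
                 finite (fst A) \<and> finite (snd A)) \<and>
         is_union_of V Ed F" unfolding F_def by (intro exI[of _ F]) (simp add: F_def)
next
  assume "\<exists>F. directed_family F \<and>
         (\<forall>A\<in>F. complete_subobj V Ed r s S T (fst A) (snd A) \<and>
                 finite (fst A) \<and> finite (snd A)) \<and>
         is_union_of V Ed F"
  then obtain F where F: "\<forall>A\<in>F. complete_subobj V Ed r s S T (fst A) (snd A) \<and>
                 finite (fst A) \<and> finite (snd A)" "is_union_of V Ed F" by blast
  have SC: "S \<subseteq> C" and TD: "T \<subseteq> D" using bg_parts[OF assms] by auto
  have CE: "\<Union>C \<subseteq> Ed" using bg_parts[OF assms] by blast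
  have DE: "\<Union>D \<subseteq> Ed" using bg_parts[OF assms] by blast
  have cover: "\<exists>E'. finite E' \<and> e \<in> E' \<and> (\<forall>X\<in>S. X \<inter> E' \<noteq> {} \<longrightarrow> X \<subseteq> E') \<and>
      (\<forall>Y\<in>T. Y \<inter> E' \<noteq> {} \<longrightarrow> Y \<subseteq> E')" if eE: "e \<in> Ed" for e
  proof -
    obtain A where A: "A \<in> F" "e \<in> snd A" using F(2) eE unfolding is_union_of_def by metis
    then have c: "complete_subobj V Ed r s S T (fst A) (snd A)" "finite (snd A)" using F(1) by auto
    have "\<forall>X\<in>S. X \<inter> snd A \<noteq> {} \<longrightarrow> X \<subseteq> snd A" "\<forall>Y\<in>T. Y \<inter> snd A \<noteq> {} \<longrightarrow> Y \<subseteq> snd A"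
      using c(1) unfolding complete_subobj_def by (blast, blast)
    then show ?thesis using c(2) A(2) by (intro exI[of _ "snd A"]) simp
  qed
  have "\<forall>X\<in>S1 S T. finite {X'. simT S T X X'}"
  proof
    fix X assume X: "X \<in> S1 S T"
    then obtain e where e: "e \<in> X" "X \<in> S" unfolding S1_def by blast
    then have "e \<in> Ed" using SC CE by blast
    then obtain E' where E': "finite E'" "e \<in> E'" "\<forall>X\<in>S. X \<inter> E' \<noteq> {} \<longrightarrow> X \<subseteq> E'"
      "\<forall>Y\<in>T. Y \<inter> E' \<noteq> {} \<longrightarrow> Y \<subseteq> E'" using cover by metis
    have "X \<inter> E' \<noteq> {}" using e E' by blast
    then show "finite {X'. simT S T X X'}" using class_finite[OF X E'(1) E'(3) E'(4)] by simp
  qed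
  moreover have "\<forall>X\<in>S1 T S. finite {X'. simT T S X X'}"
  proof
    fix X assume X: "X \<in> S1 T S"
    then obtain e where e: "e \<in> X" "X \<in> T" unfolding S1_def by blast
    then have "e \<in> Ed" using TD DE by blast
    then obtain E' where E': "finite E'" "e \<in> E'" "\<forall>X\<in>S. X \<inter> E' \<noteq> {} \<longrightarrow> X \<subseteq> E'"
      "\<forall>Y\<in>T. Y \<inter> E' \<noteq> {} \<longrightarrow> Y \<subseteq> E'" using cover by metis
    have "X \<inter> E' \<noteq> {}" using e E' by blast
    then show "finite {X'. simT T S X X'}" using class_finite[OF X E'(1) E'(4) E'(3)] by simp
  qed
  ultimately show "tame S T" unfolding tame_def by (rule conjI)
qed

end
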